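(* Let $S_1,S_2$ be solids of $\mathrm{PG}(6,q)$ with $\dim(S_1\cap S_2)\le 1$ and let $P$ be a point not contained in $S_1\cup S_2$. Then the number of planes that contain $P$ and meet both $S_1$ and $S_2$ non-trivially is at most $2q^6+2q^5+3q^4+2q^3+2q^2+q+1$.
   Context: Dimensions are projective (planes 2, solids 3). *)

theory Defs
  imports "HOL-Analysis.Analysis"
begin

text \<open>PG(n,q) is modelled via the underlying vector space ('a::{finite,field})^(n+1),
  with q = CARD('a). A projective subspace of projective dimension d is a linear
  subspace of vector dimension d+1 (points: d=0, lines: 1, planes: 2, solids: 3).\<close>

definition proj_subspace :: "nat \<Rightarrow> ('a::field ^ 'n) set \<Rightarrow> bool" where
  "proj_subspace d W \<longleftrightarrow> vec.subspace W \<and> vec.dim W = d + 1"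

end

theory Submission
  imports Defs
begin

lemma card_subspace:
  fixes W :: "('a::{finite,field}^'n) set"
  assumes "vec.subspace W"
  shows "card W = CARD('a) ^ vec.dim W"
proof -
  obtain B where B: "finite B" "B \<subseteq> W" "vec.independent B" "vec.span B = W" "card B = vec.dim W"
    using vec.basis_subspace_exists[OF assms] by metis
  define f where "f = (\<lambda>u::('a^'n) \<Rightarrow> 'a. \<Sum>v\<in>B. u v *s v)"
  have img: "W = f ` (PiE B (\<lambda>_. UNIV))"
  proof
    show "W \<subseteq> f ` (PiE B (\<lambda>_. UNIV))"
    proof
      fix w assume "w \<in> W"
      then obtain u where u: "w = (\<Sum>v\<in>B. u v *s v)"
        using vec.span_finite[OF B(1)] B(4) by auto
      have "w = f (restrict u B)" unfolding u f_def by (auto intro: sum.cong)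
      then show "w \<in> f ` (PiE B (\<lambda>_. UNIV))" by auto
    qed
    show "f ` (PiE B (\<lambda>_. UNIV)) \<subseteq> W"
      using vec.span_finite[OF B(1)] B(4) unfolding f_def by auto
  qed
  have inj: "inj_on f (PiE B (\<lambda>_. UNIV))"
  proof
    fix u u' assume u: "u \<in> PiE B (\<lambda>_. UNIV)" and u': "u' \<in> PiE B (\<lambda>_. UNIV)" and e: "f u = f u'"
    have "(\<Sum>v\<in>B. (u v - u' v) *s v) = 0"
      using e unfolding f_def by (simp add: vector_sub_rdistrib sum_subtractf)
    then have "\<forall>v\<in>B. u v - u' v = 0"
      using B(3) unfolding vec.independent_explicit
      by (auto dest: spec[where x="\<lambda>v. u v - u' v"])
    then show "u = u'" using u u' by (intro ext) (metis PiE_arb eq_iff_diff_eq_0)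
  qed
  have "card W = card (PiE B (\<lambda>_. (UNIV::'a set)))"
    using img inj card_image by metis
  also have "\<dots> = CARD('a) ^ card B" by (simp add: card_PiE B(1))
  finally show ?thesis using B(5) by simp
qed

lemma indep2:
  fixes p x :: "'a::field^'n"
  assumes "p \<noteq> 0" "x \<notin> vec.span {p}"
  shows "vec.independent {p, x}" "card {p,x} = 2"
proof -
  have "x \<noteq> p" using assms(2) vec.span_base[of p "{p}"] by auto
  then have "{p,x} = insert x {p}" by auto
  moreover have "vec.independent {p}" using assms(1) by (simp add: vec.independent_insert)
  ultimately show "vec.independent {p, x}" using assms(2) \<open>x \<noteq> p\<close> by (simp add: vec.independent_insert)
  show "card {p,x} = 2" using \<open>x \<noteq> p\<close> by auto
qed

lemma indep3:
  fixes p x y :: "'a::field^'n"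
  assumes "p \<noteq> 0" "x \<notin> vec.span {p}" "y \<notin> vec.span {p,x}"
  shows "vec.independent {p, x, y}" "card {p,x,y} = 3"
proof -
  have "x \<noteq> p" using assms(2) vec.span_base[of p "{p}"] by auto
  have "y \<noteq> p" "y \<noteq> x" using assms(3) vec.span_base[of p "{p,x}"] vec.span_base[of x "{p,x}"] by auto
  have "{p,x,y} = insert y {p,x}" by auto
  moreover have "vec.independent {p,x}" using indep2 assms by blast
  ultimately show "vec.independent {p, x, y}" using assms(3) \<open>y \<noteq> p\<close> \<open>y \<noteq> x\<close>
    by (simp add: vec.independent_insert)
  show "card {p,x,y} = 3" using \<open>x \<noteq> p\<close> \<open>y \<noteq> p\<close> \<open>y \<noteq> x\<close> by auto
qed

lemma plane_eq:
  fixes A B :: "('a::field^'n) set"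
  assumes "vec.subspace A" "vec.subspace B" "vec.dim A = 3" "vec.dim B = 3"
    "p \<noteq> 0" "x \<notin> vec.span {p}" "y \<notin> vec.span {p,x}"
    "p \<in> A" "x \<in> A" "y \<in> A" "p \<in> B" "x \<in> B" "y \<in> B"
  shows "A = B"
proof -
  have d: "vec.dim (vec.span {p,x,y}) = 3"
    using indep3[OF assms(5-7)] vec.dim_span_eq_card_independent by metis
  have "vec.span {p,x,y} \<subseteq> A" by (rule vec.span_minimal) (use assms in auto)
  have "vec.span {p,x,y} \<subseteq> B" by (rule vec.span_minimal) (use assms in auto)
  have "vec.span {p,x,y} = A"
    using vec.subspace_dim_equal[OF vec.subspace_span assms(1) \<open>vec.span {p,x,y} \<subseteq> A\<close>] assms d by simp
  moreover have "vec.span {p,x,y} = B"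
    using vec.subspace_dim_equal[OF vec.subspace_span assms(2) \<open>vec.span {p,x,y} \<subseteq> B\<close>] assms d by simp
  ultimately show ?thesis by simp
qed

lemma span2_card:
  fixes p x :: "'a::{finite,field}^'n"
  assumes "p \<noteq> 0" "x \<notin> vec.span {p}"
  shows "card (vec.span {p,x}) = CARD('a)^2"
proof -
  have "vec.dim (vec.span {p,x}) = 2"
    using indep2[OF assms] vec.dim_span_eq_card_independent by metis
  then show ?thesis using card_subspace[of "vec.span {p,x}"] by simp
qed

lemma subspace_nonzero_card:
  fixes W :: "('a::{finite,field}^'n) set"
  assumes "vec.subspace W" "W \<noteq> {0}"
  shows "CARD('a) \<le> card W"
proof -
  have "vec.dim W \<noteq> 0"
  proof
    assume "vec.dim W = 0"
    then have "W \<subseteq> {0}" by simp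
    then show False using assms vec.subspace_0[OF assms(1)] by auto
  qed
  then have "1 \<le> vec.dim W" by linarith
  moreover have "1 \<le> CARD('a)" by (simp add: Suc_leI)
  ultimately have "CARD('a) ^ 1 \<le> CARD('a) ^ vec.dim W"
    by (rule power_increasing)
  then show ?thesis using card_subspace[OF assms(1)] by simp
qed

lemma point_span:
  fixes P :: "('a::field^'n) set"
  assumes "proj_subspace 0 P" "x \<in> P" "x \<noteq> 0"
  shows "P = vec.span {x}"
proof -
  have "vec.independent {x}" using assms(3) by (simp add: vec.independent_insert)
  then have d: "vec.dim (vec.span {x}) = 1" using vec.dim_span_eq_card_independent by fastforce
  have "vec.span {x} \<subseteq> P"
    by (rule vec.span_minimal) (use assms in \<open>auto simp: proj_subspace_def\<close>)
  then have "vec.span {x} = P"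
    using vec.subspace_dim_equal[OF vec.subspace_span _ \<open>vec.span {x} \<subseteq> P\<close>] assms d
    by (simp add: proj_subspace_def)
  then show ?thesis by simp
qed

lemma count_fibers:
  assumes "finite N" "finite D" "\<forall>\<pi>\<in>N. F \<pi> \<subseteq> D"
    "\<forall>\<pi>\<in>N. \<forall>\<pi>'\<in>N. F \<pi> \<inter> F \<pi>' \<noteq> {} \<longrightarrow> \<pi> = \<pi>'"
    "\<forall>\<pi>\<in>N. k \<le> card (F \<pi>)"
  shows "card N * k \<le> card D"
proof -
  have "card N * k = (\<Sum>\<pi>\<in>N. k)" by simp
  also have "\<dots> \<le> (\<Sum>\<pi>\<in>N. card (F \<pi>))" using assms(5) by (intro sum_mono) auto
  also have "\<dots> = card (\<Union>\<pi>\<in>N. F \<pi>)"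
  proof (rule card_UN_disjoint[symmetric])
    show "\<forall>i\<in>N. finite (F i)" using assms(2,3) finite_subset by blast
    show "\<forall>i\<in>N. \<forall>j\<in>N. i \<noteq> j \<longrightarrow> F i \<inter> F j = {}" using assms(4) by blast
  qed (use assms in auto)
  also have "\<dots> \<le> card D" using assms by (intro card_mono) auto
  finally show ?thesis .
qed

lemma card_Sigma_const:
  fixes A :: "'a::finite set" and B :: "'a \<Rightarrow> 'b::finite set"
  assumes "\<And>a. a \<in> A \<Longrightarrow> card (B a) = k"
  shows "card (Sigma A B) = card A * k"
proof -
  have "card (Sigma A B) = (\<Sum>a\<in>A. card (B a))" by (rule card_SigmaI) auto
  also have "\<dots> = (\<Sum>a\<in>A. k)" using assms by (rule sum.cong[OF refl])
  finally show ?thesis by simp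
qed

lemma K_dim:
  fixes S S' P :: "('a::field^'n) set"
  assumes "vec.subspace S" "vec.subspace S'" "vec.subspace P" "vec.dim S = 4" "vec.dim S' = 4"
    "vec.dim P = 1" "vec.dim (S \<inter> S') \<le> 2" "S \<inter> P \<subseteq> {0}" "S' \<inter> P \<subseteq> {0}"
  shows "vec.dim (S \<inter> {x+y|x y. x\<in>S' \<and> y\<in>P}) \<le> 3"
    and "vec.dim ({x+y|x y. x\<in>S \<and> y\<in>P} \<inter> {x+y|x y. x\<in>S' \<and> y\<in>P})
         = vec.dim (S \<inter> {x+y|x y. x\<in>S' \<and> y\<in>P}) + 1"
proof -
  define T where "T = {x+y|x y. x\<in>S \<and> y\<in>P}"
  define T' where "T' = {x+y|x y. x\<in>S' \<and> y\<in>P}"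
  define K where "K = S \<inter> T'"
  have T'sub: "vec.subspace T'" unfolding T'_def using assms by (intro vec.subspace_sums)
  have Tsub: "vec.subspace T" unfolding T_def using assms by (intro vec.subspace_sums)
  have S'T': "S' \<subseteq> T'" unfolding T'_def using vec.subspace_0[OF assms(3)] by force
  have PT': "P \<subseteq> T'" unfolding T'_def using vec.subspace_0[OF assms(2)] by force
  have Ksub: "vec.subspace K" unfolding K_def using assms(1) T'sub by (rule vec.subspace_inter)
  define V where "V = {x+y|x y. x\<in>S \<and> y\<in>T'}"
  define W where "W = {x+y|x y. x\<in>S \<and> y\<in>S'}"
  have "vec.dim V + vec.dim K = 4 + vec.dim T'"
    using vec.dim_sums_Int[OF assms(1) T'sub] assms unfolding V_def K_def by simp
  moreover have "vec.dim T' + vec.dim (S' \<inter> P) = 4 + 1"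
    using vec.dim_sums_Int[OF assms(2,3)] assms unfolding T'_def by simp
  moreover have "vec.dim (S' \<inter> P) = 0" using assms(9) by simp
  moreover have "vec.dim W + vec.dim (S \<inter> S') = 4 + 4"
    using vec.dim_sums_Int[OF assms(1,2)] assms unfolding W_def by simp
  moreover have "vec.dim W \<le> vec.dim V"
    by (rule vec.dim_subset) (use S'T' in \<open>auto simp: W_def V_def\<close>)
  ultimately show K3: "vec.dim (S \<inter> T') \<le> 3" using assms(7) unfolding K_def by linarith
  have J: "T \<inter> T' = {x+y|x y. x\<in>K \<and> y\<in>P}"
  proof
    show "T \<inter> T' \<subseteq> {x+y|x y. x\<in>K \<and> y\<in>P}"
    proof
      fix z assume z: "z \<in> T \<inter> T'"
      then obtain s y where sy: "z = s + y" "s \<in> S" "y \<in> P" unfolding T_def by auto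
      have "s = z - y" using sy by simp
      moreover have "z \<in> T'" "y \<in> T'" using z sy PT' by auto
      ultimately have "s \<in> T'" using vec.subspace_diff[OF T'sub] by metis
      then show "z \<in> {x+y|x y. x\<in>K \<and> y\<in>P}" using sy unfolding K_def by auto
    qed
    show "{x+y|x y. x\<in>K \<and> y\<in>P} \<subseteq> T \<inter> T'"
    proof
      fix z assume "z \<in> {x+y|x y. x\<in>K \<and> y\<in>P}"
      then obtain s y where sy: "z = s + y" "s \<in> K" "y \<in> P" by auto
      have "z \<in> T" using sy unfolding T_def K_def by auto
      moreover have "z \<in> T'" using sy PT' vec.subspace_add[OF T'sub] unfolding K_def by auto
      ultimately show "z \<in> T \<inter> T'" by simp
    qed
  qed
  have "vec.dim (T \<inter> T') + vec.dim (K \<inter> P) = vec.dim K + 1"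
    using vec.dim_sums_Int[OF Ksub assms(3)] assms J by simp
  moreover have "vec.dim (K \<inter> P) = 0" using assms(8) unfolding K_def by auto
  ultimately show "vec.dim (T \<inter> T') = vec.dim (S \<inter> T') + 1" unfolding K_def by simp
qed

lemma final4:
  fixes q x1 x2 y :: int
  assumes q: "2 \<le> q"
    and h1: "x1 * ((q^3-q)*(q^3-q^2)) \<le> (q^4-q)*(q^4-q^2)"
    and h2: "x2 * ((q^2-q)*(q^3-q^2)) \<le> (q^4-q)*(q^7-q^4)"
    and h3: "y * ((q-1)*(q-1)) \<le> (q^4-q^3)*(q^4-q^3)"
  shows "x1+x2+y \<le> 2*q^6 + 2*q^5 + 3*q^4 + 2*q^3 + 2*q^2 + q + 1"
proof -
  have A1: "(q^3-q)*(q^3-q^2) = q^3*(q+1)*((q-1)*(q-1))" by algebra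
  have A2: "(q^2-q)*(q^3-q^2) = q^3*((q-1)*(q-1))" by algebra
  have p1: "0 < q^3*(q+1)*((q-1)*(q-1))" using q by (intro mult_pos_pos) auto
  have p2: "0 < q^3*((q-1)*(q-1))" using q by (intro mult_pos_pos) auto
  have p3: "0 < (q-1)*(q-1)" using q by (intro mult_pos_pos) auto
  have e1: "(q^4-q)*(q^4-q^2) = (q^2+q+1) * (q^3*(q+1)*((q-1)*(q-1)))" by algebra
  have "x1 * (q^3*(q+1)*((q-1)*(q-1))) \<le> (q^2+q+1) * (q^3*(q+1)*((q-1)*(q-1)))"
    using h1 unfolding A1 e1 .
  then have b1: "x1 \<le> q^2+q+1" using p1 mult_le_cancel_right_pos by blast
  have e2: "(q^4-q)*(q^7-q^4) = (q^2*(q^2+q+1)*(q^2+q+1)) * (q^3*((q-1)*(q-1)))" by algebra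
  have "x2 * (q^3*((q-1)*(q-1))) \<le> (q^2*(q^2+q+1)*(q^2+q+1)) * (q^3*((q-1)*(q-1)))"
    using h2 unfolding A2 e2 .
  then have b2: "x2 \<le> q^2*(q^2+q+1)*(q^2+q+1)" using p2 mult_le_cancel_right_pos by blast
  have e3: "(q^4-q^3)*(q^4-q^3) = q^6 * ((q-1)*(q-1))" by algebra
  have "y * ((q-1)*(q-1)) \<le> q^6 * ((q-1)*(q-1))" using h3 unfolding e3 .
  then have b3: "y \<le> q^6" using p3 mult_le_cancel_right_pos by blast
  have "q^2*(q^2+q+1)*(q^2+q+1) + (q^2+q+1) + q^6 = 2*q^6 + 2*q^5 + 3*q^4 + 2*q^3 + 2*q^2 + q + 1"
    by algebra
  then show ?thesis using b1 b2 b3 by linarith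
qed

lemma final3:
  fixes q x1 x2 y :: int
  assumes q: "2 \<le> q"
    and h1: "x1 * ((q^3-q)*(q^3-q^2)) \<le> (q^3-q)*(q^3-q^2)"
    and h2: "x2 * ((q^2-q)*(q^3-q^2)) \<le> (q^3-q)*(q^7-q^3)"
    and h3: "y * ((q-1)*(q-1)) \<le> (q^4-q^2)*(q^4-q^2)"
  shows "x1+x2+y \<le> 2*q^6 + 2*q^5 + 3*q^4 + 2*q^3 + 2*q^2 + q + 1"
proof -
  have A1: "(q^3-q)*(q^3-q^2) = q^3*(q+1)*((q-1)*(q-1))" by algebra
  have A2: "(q^2-q)*(q^3-q^2) = q^3*((q-1)*(q-1))" by algebra
  have p1: "0 < q^3*(q+1)*((q-1)*(q-1))" using q by (intro mult_pos_pos) auto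
  have p2: "0 < q^3*((q-1)*(q-1))" using q by (intro mult_pos_pos) auto
  have p3: "0 < (q-1)*(q-1)" using q by (intro mult_pos_pos) auto
  have "x1 * (q^3*(q+1)*((q-1)*(q-1))) \<le> 1 * (q^3*(q+1)*((q-1)*(q-1)))"
    using h1 unfolding A1 by simp
  then have b1: "x1 \<le> 1" using p1 mult_le_cancel_right_pos by blast
  have e2: "(q^3-q)*(q^7-q^3) = (q*(q+1)*(q^3+q^2+q+1)) * (q^3*((q-1)*(q-1)))" by algebra
  have "x2 * (q^3*((q-1)*(q-1))) \<le> (q*(q+1)*(q^3+q^2+q+1)) * (q^3*((q-1)*(q-1)))"
    using h2 unfolding A2 e2 .
  then have b2: "x2 \<le> q*(q+1)*(q^3+q^2+q+1)" using p2 mult_le_cancel_right_pos by blast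
  have e3: "(q^4-q^2)*(q^4-q^2) = (q^4*(q+1)*(q+1)) * ((q-1)*(q-1))" by algebra
  have "y * ((q-1)*(q-1)) \<le> (q^4*(q+1)*(q+1)) * ((q-1)*(q-1))" using h3 unfolding e3 .
  then have b3: "y \<le> q^4*(q+1)*(q+1)" using p3 mult_le_cancel_right_pos by blast
  have "0 \<le> q^5 * (q - 1)" using q by simp
  moreover have "q*(q+1)*(q^3+q^2+q+1) + 1 + q^4*(q+1)*(q+1) + q^5 * (q - 1)
     = 2*q^6 + 2*q^5 + 3*q^4 + 2*q^3 + 2*q^2 + q + 1"
    by algebra
  ultimately show ?thesis using b1 b2 b3 by linarith
qed

lemma conv_int:
  fixes x a b c e f g h i :: nat
  assumes "x * ((a - b) * (c - e)) \<le> (f - g) * (h - i)" "b \<le> a" "e \<le> c" "g \<le> f" "i \<le> h"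
  shows "int x * ((int a - int b) * (int c - int e)) \<le> (int f - int g) * (int h - int i)"
proof -
  have "int (x * ((a - b) * (c - e))) \<le> int ((f - g) * (h - i))" using assms(1) by (simp only: of_nat_le_iff)
  then show ?thesis using assms(2-5) by (simp only: of_nat_mult of_nat_diff)
qed

theorem lemma4p4:
  fixes S1 S2 P :: "('a::{finite,field} ^ 7) set"
  assumes "proj_subspace 3 S1" and "proj_subspace 3 S2"
    and "vec.dim (S1 \<inter> S2) \<le> 1 + 1"
    and "proj_subspace 0 P"
    and "\<not> P \<subseteq> S1 \<union> S2"
  shows "card {\<pi>. proj_subspace 2 \<pi> \<and> P \<subseteq> \<pi> \<and> \<pi> \<inter> S1 \<noteq> {0} \<and> \<pi> \<inter> S2 \<noteq> {0}}
    \<le> 2 * CARD('a)^6 + 2 * CARD('a)^5 + 3 * CARD('a)^4 + 2 * CARD('a)^3 + 2 * CARD('a)^2 + CARD('a) + 1"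
proof -
  define q where "q = CARD('a)"
  have q2: "2 \<le> q"
  proof -
    have "card {0::'a, 1} \<le> card (UNIV::'a set)" by (rule card_mono) auto
    then show ?thesis unfolding q_def by simp
  qed
  have S1: "vec.subspace S1" "vec.dim S1 = 4" using assms(1) by (auto simp: proj_subspace_def)
  have S2: "vec.subspace S2" "vec.dim S2 = 4" using assms(2) by (auto simp: proj_subspace_def)
  have Ps: "vec.subspace P" "vec.dim P = 1" using assms(4) by (auto simp: proj_subspace_def)
  have cP: "card P = q" using card_subspace[OF Ps(1)] Ps(2) q_def by simp
  obtain p where p: "p \<in> P" "p \<noteq> 0"
  proof -
    have "\<not> P \<subseteq> {0}"
    proof
      assume "P \<subseteq> {0}"
      then have "card P \<le> 1" using card_mono[of "{0}" P] by simp
      then show False using cP q2 by simp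
    qed
    then show ?thesis using that by auto
  qed
  have Pspan: "P = vec.span {p}" using point_span[OF assms(4) p] .
  have S1P: "S1 \<inter> P \<subseteq> {0}"
  proof
    fix x assume x: "x \<in> S1 \<inter> P"
    show "x \<in> {0}"
    proof (rule ccontr)
      assume "x \<notin> {0}"
      then have "P = vec.span {x}" using point_span[OF assms(4)] x by auto
      also have "\<dots> \<subseteq> S1" using x S1 by (intro vec.span_minimal) auto
      finally show False using assms(5) by auto
    qed
  qed
  have S2P: "S2 \<inter> P \<subseteq> {0}"
  proof
    fix x assume x: "x \<in> S2 \<inter> P"
    show "x \<in> {0}"
    proof (rule ccontr)
      assume "x \<notin> {0}"
      then have "P = vec.span {x}" using point_span[OF assms(4)] x by auto
      also have "\<dots> \<subseteq> S2" using x S2 by (intro vec.span_minimal) auto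
      finally show False using assms(5) by auto
    qed
  qed
  define T1 where "T1 = {x+y|x y. x\<in>S1 \<and> y\<in>P}"
  define T2 where "T2 = {x+y|x y. x\<in>S2 \<and> y\<in>P}"
  define J where "J = T1 \<inter> T2"
  have T1sub: "vec.subspace T1" unfolding T1_def using S1 Ps by (intro vec.subspace_sums)
  have T2sub: "vec.subspace T2" unfolding T2_def using S2 Ps by (intro vec.subspace_sums)
  have Jsub: "vec.subspace J" unfolding J_def using T1sub T2sub by (rule vec.subspace_inter)
  have S1T1: "S1 \<subseteq> T1" unfolding T1_def using vec.subspace_0[OF Ps(1)] by force
  have S2T2: "S2 \<subseteq> T2" unfolding T2_def using vec.subspace_0[OF Ps(1)] by force
  have PT1: "P \<subseteq> T1" unfolding T1_def using vec.subspace_0[OF S1(1)] by force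
  have PT2: "P \<subseteq> T2" unfolding T2_def using vec.subspace_0[OF S2(1)] by force
  have PJ: "P \<subseteq> J" using PT1 PT2 J_def by auto
  have dS: "vec.dim (S1 \<inter> S2) \<le> 2" "vec.dim (S2 \<inter> S1) \<le> 2" using assms(3) by (simp_all add: Int_commute)
  note KA = K_dim[OF S1(1) S2(1) Ps(1) S1(2) S2(2) Ps(2) dS(1) S1P S2P, folded T1_def T2_def]
  note KB = K_dim[OF S2(1) S1(1) Ps(1) S2(2) S1(2) Ps(2) dS(2) S2P S1P, folded T1_def T2_def]
  define d where "d = vec.dim J"
  have d4: "d \<le> 4" using KA unfolding d_def J_def by simp
  have d3: "3 \<le> d"
  proof -
    have "vec.dim {x+y|x y. x\<in>T1 \<and> y\<in>T2} + vec.dim J = vec.dim T1 + vec.dim T2"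
      using vec.dim_sums_Int[OF T1sub T2sub] J_def by simp
    moreover have "vec.dim T1 + vec.dim (S1 \<inter> P) = 4 + 1"
      using vec.dim_sums_Int[OF S1(1) Ps(1)] S1 Ps unfolding T1_def by simp
    moreover have "vec.dim T2 + vec.dim (S2 \<inter> P) = 4 + 1"
      using vec.dim_sums_Int[OF S2(1) Ps(1)] S2 Ps unfolding T2_def by simp
    moreover have "vec.dim (S1 \<inter> P) = 0" "vec.dim (S2 \<inter> P) = 0" using S1P S2P by simp_all
    moreover have "vec.dim {x+y|x y. x\<in>T1 \<and> y\<in>T2} \<le> 7"
      using dim_subset_UNIV_cart_gen[of "{x+y|x y. x\<in>T1 \<and> y\<in>T2}"] by simp
    ultimately show ?thesis unfolding d_def by linarith
  qed
  have K1: "S1 \<inter> J = S1 \<inter> T2" using S1T1 J_def by auto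
  have K2: "S2 \<inter> J = S2 \<inter> T1" using S2T2 J_def by auto
  have cJ: "card J = q^d" using card_subspace[OF Jsub] unfolding d_def q_def .
  have cK1: "card (S1 \<inter> J) = q^(d-1)"
    using card_subspace[OF vec.subspace_inter[OF S1(1) Jsub]] KA K1 unfolding d_def q_def J_def by simp
  have cK2: "card (S2 \<inter> J) = q^(d-1)"
    using card_subspace[OF vec.subspace_inter[OF S2(1) Jsub]] KB K2 unfolding d_def q_def J_def
    by (simp add: Int_commute)
  have cS1: "card S1 = q^4" using card_subspace[OF S1(1)] S1(2) q_def by simp
  have cS2: "card S2 = q^4" using card_subspace[OF S2(1)] S2(2) q_def by simp
  have cU: "card (UNIV :: ('a^7) set) = q^7" unfolding q_def by simp
  have spanx: "\<And>x. x \<notin> P \<Longrightarrow> x \<notin> vec.span {p}" using Pspan by simp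
  have c2: "\<And>x. x \<notin> P \<Longrightarrow> card (vec.span {p,x}) = q^2"
    using span2_card[OF p(2)] Pspan q_def by simp
  have pJ: "p \<in> J" using PJ p by auto
  have spJ: "\<And>x. x \<in> J \<Longrightarrow> vec.span {p,x} \<subseteq> J"
    using pJ Jsub by (intro vec.span_minimal) auto
  have cplane: "card \<pi> = q^3" if "proj_subspace 2 \<pi>" for \<pi> :: "('a^7) set"
    using card_subspace[of \<pi>] that q_def by (auto simp: proj_subspace_def)
  define X1 where "X1 = {\<pi>. proj_subspace 2 \<pi> \<and> P \<subseteq> \<pi> \<and> \<pi> \<subseteq> J}"
  define D1 where "D1 = (SIGMA x:J - P. J - vec.span {p,x})"
  have cD1: "card D1 = (q^d - q) * (q^d - q^2)"
  proof -
    have "card (J - P) = q^d - q" using card_Diff_subset[OF _ PJ] cJ cP by simp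
    moreover have "\<And>x. x \<in> J - P \<Longrightarrow> card (J - vec.span {p,x}) = q^d - q^2"
      using card_Diff_subset[OF _ spJ] cJ c2 by simp
    ultimately show ?thesis unfolding D1_def by (simp add: card_Sigma_const)
  qed
  have X1c: "card X1 * ((q^3 - q) * (q^3 - q^2)) \<le> card D1"
  proof (rule count_fibers[where F="\<lambda>\<pi>. SIGMA x:\<pi> - P. \<pi> - vec.span {p,x}"])
    show "finite X1" "finite D1" by simp_all
    show "\<forall>\<pi>\<in>X1. (SIGMA x:\<pi> - P. \<pi> - vec.span {p,x}) \<subseteq> D1"
      unfolding X1_def D1_def by auto
    show "\<forall>\<pi>\<in>X1. \<forall>\<pi>'\<in>X1. (SIGMA x:\<pi> - P. \<pi> - vec.span {p,x}) \<inter> (SIGMA x:\<pi>' - P. \<pi>' - vec.span {p,x}) \<noteq> {} \<longrightarrow> \<pi> = \<pi>'"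
    proof (intro ballI impI)
      fix \<pi> \<pi>' assume A: "\<pi> \<in> X1" "\<pi>' \<in> X1"
        and "(SIGMA x:\<pi> - P. \<pi> - vec.span {p,x}) \<inter> (SIGMA x:\<pi>' - P. \<pi>' - vec.span {p,x}) \<noteq> {}"
      then obtain x y where xy: "x \<in> \<pi> - P" "y \<in> \<pi> - vec.span {p,x}" "x \<in> \<pi>' - P" "y \<in> \<pi>' - vec.span {p,x}"
        by blast
      show "\<pi> = \<pi>'"
        by (rule plane_eq[OF _ _ _ _ p(2) spanx[of x], of _ _ y]) (use A xy p in \<open>auto simp: X1_def proj_subspace_def\<close>)
    qed
    show "\<forall>\<pi>\<in>X1. (q^3 - q) * (q^3 - q^2) \<le> card (SIGMA x:\<pi> - P. \<pi> - vec.span {p,x})"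
    proof
      fix \<pi> assume A: "\<pi> \<in> X1"
      have pl: "vec.subspace \<pi>" "P \<subseteq> \<pi>" "card \<pi> = q^3" using A cplane by (auto simp: X1_def proj_subspace_def)
      have "card (\<pi> - P) = q^3 - q" using card_Diff_subset[OF _ pl(2)] pl cP by simp
      moreover have "\<And>x. x \<in> \<pi> - P \<Longrightarrow> card (\<pi> - vec.span {p,x}) = q^3 - q^2"
      proof -
        fix x assume x: "x \<in> \<pi> - P"
        have "vec.span {p,x} \<subseteq> \<pi>" using x pl p by (intro vec.span_minimal) auto
        then show "card (\<pi> - vec.span {p,x}) = q^3 - q^2" using card_Diff_subset[of "vec.span {p,x}" \<pi>] pl c2 x by simp
      qed
      ultimately show "(q^3 - q) * (q^3 - q^2) \<le> card (SIGMA x:\<pi> - P. \<pi> - vec.span {p,x})"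
        by (simp add: card_Sigma_const)
    qed
  qed
  define X2 where "X2 = {\<pi>. proj_subspace 2 \<pi> \<and> P \<subseteq> \<pi> \<and> \<not> \<pi> \<subseteq> J \<and> \<pi> \<inter> J \<noteq> P}"
  define D2 where "D2 = (J - P) \<times> (UNIV - J)"
  have cD2: "card D2 = (q^d - q) * (q^7 - q^d)"
  proof -
    have "card (J - P) = q^d - q" using card_Diff_subset[OF _ PJ] cJ cP by simp
    moreover have "card (UNIV - J) = q^7 - q^d" using card_Diff_subset[of J UNIV] cJ cU by simp
    ultimately show ?thesis unfolding D2_def by (simp add: card_cartesian_product)
  qed
  have X2c: "card X2 * ((q^2 - q) * (q^3 - q^2)) \<le> card D2"
  proof (rule count_fibers[where F="\<lambda>\<pi>. (\<pi> \<inter> J - P) \<times> (\<pi> - J)"])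
    show "finite X2" "finite D2" by simp_all
    show "\<forall>\<pi>\<in>X2. (\<pi> \<inter> J - P) \<times> (\<pi> - J) \<subseteq> D2"
      unfolding X2_def D2_def by auto
    show "\<forall>\<pi>\<in>X2. \<forall>\<pi>'\<in>X2. (\<pi> \<inter> J - P) \<times> (\<pi> - J) \<inter> (\<pi>' \<inter> J - P) \<times> (\<pi>' - J) \<noteq> {} \<longrightarrow> \<pi> = \<pi>'"
    proof (intro ballI impI)
      fix \<pi> \<pi>' assume A: "\<pi> \<in> X2" "\<pi>' \<in> X2"
        and "(\<pi> \<inter> J - P) \<times> (\<pi> - J) \<inter> (\<pi>' \<inter> J - P) \<times> (\<pi>' - J) \<noteq> {}"
      then obtain x y where xy: "x \<in> \<pi> \<inter> J - P" "y \<in> \<pi> - J" "x \<in> \<pi>' \<inter> J - P" "y \<in> \<pi>' - J"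
        by blast
      have xP: "x \<notin> P" using xy by auto
      have "y \<notin> vec.span {p,x}" using spJ[of x] xy by auto
      note yn = this
      show "\<pi> = \<pi>'"
        by (rule plane_eq[OF _ _ _ _ p(2) spanx[OF xP] yn]) (use A xy p in \<open>auto simp: X2_def proj_subspace_def\<close>)
    qed
    show "\<forall>\<pi>\<in>X2. (q^2 - q) * (q^3 - q^2) \<le> card ((\<pi> \<inter> J - P) \<times> (\<pi> - J))"
    proof
      fix \<pi> assume A: "\<pi> \<in> X2"
      have pl: "vec.subspace \<pi>" "P \<subseteq> \<pi>" "card \<pi> = q^3" "vec.dim \<pi> = 3" "\<not> \<pi> \<subseteq> J" "\<pi> \<inter> J \<noteq> P"
        using A cplane by (auto simp: X2_def proj_subspace_def)
      have isub: "vec.subspace (\<pi> \<inter> J)" using pl(1) Jsub by (rule vec.subspace_inter)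
      have PiJ: "P \<subseteq> \<pi> \<inter> J" using pl PJ by auto
      have "vec.dim (\<pi> \<inter> J) \<le> 3" using vec.dim_subset[of "\<pi> \<inter> J" \<pi>] pl by auto
      moreover have "vec.dim (\<pi> \<inter> J) \<ge> 1" using vec.dim_subset[OF PiJ] Ps by simp
      moreover have "vec.dim (\<pi> \<inter> J) \<noteq> 1"
        using vec.subspace_dim_equal[OF Ps(1) isub PiJ] Ps pl by auto
      moreover have "vec.dim (\<pi> \<inter> J) \<noteq> 3"
        using vec.subspace_dim_equal[OF isub pl(1)] pl by auto
      ultimately have "vec.dim (\<pi> \<inter> J) = 2" by linarith
      then have ci: "card (\<pi> \<inter> J) = q^2" using card_subspace[OF isub] q_def by simp
      have "card (\<pi> \<inter> J - P) = q^2 - q" using card_Diff_subset[OF _ PiJ] ci cP by simp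
      moreover have "card (\<pi> - J) = q^3 - q^2"
      proof -
        have "\<pi> - J = \<pi> - (\<pi> \<inter> J)" by auto
        then show ?thesis using card_Diff_subset[of "\<pi> \<inter> J" \<pi>] ci pl by simp
      qed
      ultimately show "(q^2 - q) * (q^3 - q^2) \<le> card ((\<pi> \<inter> J - P) \<times> (\<pi> - J))"
        by (simp add: card_cartesian_product)
    qed
  qed
  define Y where "Y = {\<pi>. proj_subspace 2 \<pi> \<and> P \<subseteq> \<pi> \<and> \<pi> \<inter> J = P \<and> \<pi> \<inter> S1 \<noteq> {0} \<and> \<pi> \<inter> S2 \<noteq> {0}}"
  define D3 where "D3 = (S1 - J) \<times> (S2 - J)"
  have cD3: "card D3 = (q^4 - q^(d-1)) * (q^4 - q^(d-1))"
  proof -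
    have "S1 - J = S1 - (S1 \<inter> J)" "S2 - J = S2 - (S2 \<inter> J)" by auto
    then have "card (S1 - J) = q^4 - q^(d-1)" "card (S2 - J) = q^4 - q^(d-1)"
      using card_Diff_subset[of "S1 \<inter> J" S1] card_Diff_subset[of "S2 \<inter> J" S2] cS1 cS2 cK1 cK2 by simp_all
    then show ?thesis unfolding D3_def by (simp add: card_cartesian_product)
  qed
  have Yc: "card Y * ((q - 1) * (q - 1)) \<le> card D3"
  proof (rule count_fibers[where F="\<lambda>\<pi>. (\<pi> \<inter> S1 - {0}) \<times> (\<pi> \<inter> S2 - {0})"])
    show "finite Y" "finite D3" by simp_all
    show "\<forall>\<pi>\<in>Y. (\<pi> \<inter> S1 - {0}) \<times> (\<pi> \<inter> S2 - {0}) \<subseteq> D3"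
    proof
      fix \<pi> assume A: "\<pi> \<in> Y"
      have "\<pi> \<inter> J = P" using A by (simp add: Y_def)
      then show "(\<pi> \<inter> S1 - {0}) \<times> (\<pi> \<inter> S2 - {0}) \<subseteq> D3"
        unfolding D3_def using S1P S2P by blast
    qed
    show "\<forall>\<pi>\<in>Y. \<forall>\<pi>'\<in>Y. (\<pi> \<inter> S1 - {0}) \<times> (\<pi> \<inter> S2 - {0}) \<inter> (\<pi>' \<inter> S1 - {0}) \<times> (\<pi>' \<inter> S2 - {0}) \<noteq> {} \<longrightarrow> \<pi> = \<pi>'"
    proof (intro ballI impI)
      fix \<pi> \<pi>' assume A: "\<pi> \<in> Y" "\<pi>' \<in> Y"
        and "(\<pi> \<inter> S1 - {0}) \<times> (\<pi> \<inter> S2 - {0}) \<inter> (\<pi>' \<inter> S1 - {0}) \<times> (\<pi>' \<inter> S2 - {0}) \<noteq> {}"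
      then obtain x y where xy: "x \<in> \<pi> \<inter> S1 - {0}" "y \<in> \<pi> \<inter> S2 - {0}" "x \<in> \<pi>' \<inter> S1 - {0}" "y \<in> \<pi>' \<inter> S2 - {0}"
        by blast
      have xP: "x \<notin> P" using xy S1P by auto
      have "y \<notin> vec.span {p,x}"
      proof
        assume y: "y \<in> vec.span {p,x}"
        have "vec.span {p,x} \<subseteq> T1" using T1sub p PT1 xy S1T1 by (intro vec.span_minimal) auto
        then have "y \<in> J" using y xy S2T2 J_def by auto
        then have "y \<in> P" using A xy by (auto simp: Y_def)
        then show False using xy S2P by auto
      qed
      note yn = this
      show "\<pi> = \<pi>'"
        by (rule plane_eq[OF _ _ _ _ p(2) spanx[OF xP] yn]) (use A xy p in \<open>auto simp: Y_def proj_subspace_def\<close>)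
    qed
    show "\<forall>\<pi>\<in>Y. (q - 1) * (q - 1) \<le> card ((\<pi> \<inter> S1 - {0}) \<times> (\<pi> \<inter> S2 - {0}))"
    proof
      fix \<pi> assume A: "\<pi> \<in> Y"
      have pl: "vec.subspace \<pi>" "\<pi> \<inter> S1 \<noteq> {0}" "\<pi> \<inter> S2 \<noteq> {0}"
        using A by (auto simp: Y_def proj_subspace_def)
      have s1: "vec.subspace (\<pi> \<inter> S1)" using pl(1) S1(1) by (rule vec.subspace_inter)
      have s2: "vec.subspace (\<pi> \<inter> S2)" using pl(1) S2(1) by (rule vec.subspace_inter)
      have "q \<le> card (\<pi> \<inter> S1)" using subspace_nonzero_card[OF s1 pl(2)] q_def by simp
      moreover have "q \<le> card (\<pi> \<inter> S2)" using subspace_nonzero_card[OF s2 pl(3)] q_def by simp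
      moreover have "card (\<pi> \<inter> S1 - {0}) = card (\<pi> \<inter> S1) - 1"
        using vec.subspace_0[OF s1] by (simp add: card_Diff_singleton)
      moreover have "card (\<pi> \<inter> S2 - {0}) = card (\<pi> \<inter> S2) - 1"
        using vec.subspace_0[OF s2] by (simp add: card_Diff_singleton)
      ultimately show "(q - 1) * (q - 1) \<le> card ((\<pi> \<inter> S1 - {0}) \<times> (\<pi> \<inter> S2 - {0}))"
        by (simp add: card_cartesian_product mult_le_mono)
    qed
  qed
  define N where "N = {\<pi>. proj_subspace 2 \<pi> \<and> P \<subseteq> \<pi> \<and> \<pi> \<inter> S1 \<noteq> {0} \<and> \<pi> \<inter> S2 \<noteq> {0}}"
  have "N \<subseteq> X1 \<union> X2 \<union> Y" unfolding N_def X1_def X2_def Y_def by blast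
  then have "card N \<le> card (X1 \<union> X2 \<union> Y)" by (intro card_mono) simp_all
  also have "\<dots> \<le> card (X1 \<union> X2) + card Y" by (rule card_Un_le)
  also have "\<dots> \<le> card X1 + card X2 + card Y" using card_Un_le[of X1 X2] by simp
  finally have cN: "int (card N) \<le> int (card X1) + int (card X2) + int (card Y)" by linarith
  have q1: "1 \<le> q" using q2 by simp
  have pw: "q^a \<le> q^b" if "a \<le> b" for a b using power_increasing[OF that q1] .
  have pw1: "q \<le> q^b" if "1 \<le> b" for b using pw[OF that] by simp
  have iq: "2 \<le> int q" using q2 by simp
  have "d = 3 \<or> d = 4" using d3 d4 by linarith
  then have "int (card X1) + int (card X2) + int (card Y) \<le>
     2 * int q^6 + 2 * int q^5 + 3 * int q^4 + 2 * int q^3 + 2 * int q^2 + int q + 1"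
  proof
    assume d: "d = 3"
    have h1: "card X1 * ((q^3 - q) * (q^3 - q^2)) \<le> (q^3 - q) * (q^3 - q^2)" using X1c cD1 d by simp
    have h2: "card X2 * ((q^2 - q) * (q^3 - q^2)) \<le> (q^3 - q) * (q^7 - q^3)" using X2c cD2 d by simp
    have h3: "card Y * ((q - 1) * (q - 1)) \<le> (q^4 - q^2) * (q^4 - q^2)" using Yc cD3 d by simp
    show ?thesis
      apply (rule final3[OF iq])
      using conv_int[OF h1 pw1 pw pw1 pw] conv_int[OF h2 pw1 pw pw1 pw] conv_int[OF h3 q1 q1 pw pw]
      by simp_all
  next
    assume d: "d = 4"
    have h1: "card X1 * ((q^3 - q) * (q^3 - q^2)) \<le> (q^4 - q) * (q^4 - q^2)" using X1c cD1 d by simp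
    have h2: "card X2 * ((q^2 - q) * (q^3 - q^2)) \<le> (q^4 - q) * (q^7 - q^4)" using X2c cD2 d by simp
    have h3: "card Y * ((q - 1) * (q - 1)) \<le> (q^4 - q^3) * (q^4 - q^3)" using Yc cD3 d by simp
    show ?thesis
      apply (rule final4[OF iq])
      using conv_int[OF h1 pw1 pw pw1 pw] conv_int[OF h2 pw1 pw pw1 pw] conv_int[OF h3 q1 q1 pw pw]
      by simp_all
  qed
  with cN have "int (card N) \<le> int (2 * q^6 + 2 * q^5 + 3 * q^4 + 2 * q^3 + 2 * q^2 + q + 1)" by simp
  then show ?thesis unfolding N_def q_def by (simp only: of_nat_le_iff)
qed

end
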